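(* In the public goods model, every MNW allocation is Pareto-optimal, satisfies Prop1, and satisfies $\frac1n$-RRS. Further, when $k\ge n$, every MNW allocation satisfies $\frac{1}{2n-1}$-Prop.
   Context: Public goods model: agents $[n]$, goods $G=[m]$, integer $0\le k\le m$, nonnegative integer additive values $v_{ij}$ ($v_i(S)=\sum_{j\in S}v_{ij}$), every agent having some good with $v_{ij}>0$. An allocation is $x\subseteq G$ with $|x|\le k$. $\mathrm{NW}(x)=(\prod_i v_i(x))^{1/n}$; an MNW allocation maximizes NW over allocations, where if all allocations have NW $0$, an MNW allocation maximizes the number of agents with positive utility and, subject to that, the product of positive utilities. $y$ Pareto-dominates $x$ if $v_i(y)\ge v_i(x)$ for all $i$ with at least one strict; $x$ is Pareto-optimal if no allocation Pareto-dominates it. $\mathrm{Prop}_i=\frac1n\max_{|y|\le k}v_i(y)$ and $\mathrm{RRS}_i=\max_{|y|\le\lfloor k/n\rfloor}v_i(y)$. For $\alpha\in(0,1]$: $x$ is $\alpha$-Prop if $v_i(x)\ge\alpha\,\mathrm{Prop}_i$ for all $i$; $x$ is $\alpha$-RRS if $v_i(x)\ge\alpha\,\mathrm{RRS}_i$ for all $i$; $x$ is Prop1 if for every agent $i$ there exist $g\in x$ and $g'\in G$ with $v_i((x\setminus\{g\})\cup\{g'\})\ge\mathrm{Prop}_i$. *)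

theory Defs
  imports Complex_Main
begin

definition util :: "(nat \<Rightarrow> nat \<Rightarrow> nat) \<Rightarrow> nat \<Rightarrow> nat set \<Rightarrow> nat" where
  "util v i S = (\<Sum>j\<in>S. v i j)"

definition allocs :: "nat \<Rightarrow> nat \<Rightarrow> nat set set" where
  "allocs m k = {x. x \<subseteq> {..<m} \<and> card x \<le> k}"

definition NW :: "nat \<Rightarrow> (nat \<Rightarrow> nat \<Rightarrow> nat) \<Rightarrow> nat set \<Rightarrow> real" where
  "NW n v x = root n (\<Prod>i<n. real (util v i x))"

definition pos_agents :: "nat \<Rightarrow> (nat \<Rightarrow> nat \<Rightarrow> nat) \<Rightarrow> nat set \<Rightarrow> nat set" where
  "pos_agents n v x = {i. i < n \<and> util v i x > 0}"

definition MNW :: "nat \<Rightarrow> nat \<Rightarrow> nat \<Rightarrow> (nat \<Rightarrow> nat \<Rightarrow> nat) \<Rightarrow> nat set \<Rightarrow> bool" where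
  "MNW n m k v x \<longleftrightarrow> x \<in> allocs m k \<and>
     (if \<exists>y\<in>allocs m k. NW n v y > 0
      then (\<forall>y\<in>allocs m k. NW n v y \<le> NW n v x)
      else (\<forall>y\<in>allocs m k.
              card (pos_agents n v y) \<le> card (pos_agents n v x) \<and>
              (card (pos_agents n v y) = card (pos_agents n v x) \<longrightarrow>
                 (\<Prod>i\<in>pos_agents n v y. util v i y) \<le> (\<Prod>i\<in>pos_agents n v x. util v i x))))"

definition pareto_dominates :: "nat \<Rightarrow> (nat \<Rightarrow> nat \<Rightarrow> nat) \<Rightarrow> nat set \<Rightarrow> nat set \<Rightarrow> bool" where
  "pareto_dominates n v y x \<longleftrightarrow>
     (\<forall>i<n. util v i y \<ge> util v i x) \<and> (\<exists>i<n. util v i y > util v i x)"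

definition pareto_optimal :: "nat \<Rightarrow> nat \<Rightarrow> nat \<Rightarrow> (nat \<Rightarrow> nat \<Rightarrow> nat) \<Rightarrow> nat set \<Rightarrow> bool" where
  "pareto_optimal n m k v x \<longleftrightarrow> \<not> (\<exists>y\<in>allocs m k. pareto_dominates n v y x)"

definition Prop_share :: "nat \<Rightarrow> nat \<Rightarrow> nat \<Rightarrow> (nat \<Rightarrow> nat \<Rightarrow> nat) \<Rightarrow> nat \<Rightarrow> real" where
  "Prop_share n m k v i = (1 / real n) * real (Max ((\<lambda>y. util v i y) ` allocs m k))"

definition RRS :: "nat \<Rightarrow> nat \<Rightarrow> nat \<Rightarrow> (nat \<Rightarrow> nat \<Rightarrow> nat) \<Rightarrow> nat \<Rightarrow> real" where
  "RRS n m k v i = real (Max ((\<lambda>y. util v i y) ` allocs m (k div n)))"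

definition alpha_Prop :: "real \<Rightarrow> nat \<Rightarrow> nat \<Rightarrow> nat \<Rightarrow> (nat \<Rightarrow> nat \<Rightarrow> nat) \<Rightarrow> nat set \<Rightarrow> bool" where
  "alpha_Prop \<alpha> n m k v x \<longleftrightarrow> (\<forall>i<n. real (util v i x) \<ge> \<alpha> * Prop_share n m k v i)"

definition alpha_RRS :: "real \<Rightarrow> nat \<Rightarrow> nat \<Rightarrow> nat \<Rightarrow> (nat \<Rightarrow> nat \<Rightarrow> nat) \<Rightarrow> nat set \<Rightarrow> bool" where
  "alpha_RRS \<alpha> n m k v x \<longleftrightarrow> (\<forall>i<n. real (util v i x) \<ge> \<alpha> * RRS n m k v i)"

definition Prop1 :: "nat \<Rightarrow> nat \<Rightarrow> nat \<Rightarrow> (nat \<Rightarrow> nat \<Rightarrow> nat) \<Rightarrow> nat set \<Rightarrow> bool" where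
  "Prop1 n m k v x \<longleftrightarrow> (\<forall>i<n.
     real (util v i x) \<ge> Prop_share n m k v i \<or>
     (\<exists>g\<in>x. \<exists>g'\<in>{..<m}. real (util v i ((x - {g}) \<union> {g'})) \<ge> Prop_share n m k v i))"

end

theory Submission
  imports Defs
begin


lemma util_union: "finite A \<Longrightarrow> finite B \<Longrightarrow> A \<inter> B = {} \<Longrightarrow> util v i (A \<union> B) = util v i A + util v i B"
  unfolding util_def by (simp add: sum.union_disjoint)

lemma util_mono: "finite B \<Longrightarrow> A \<subseteq> B \<Longrightarrow> util v i A \<le> util v i B"
  unfolding util_def by (simp add: sum_mono2)

lemma util_split: "finite B \<Longrightarrow> A \<subseteq> B \<Longrightarrow> util v i B = util v i (B - A) + util v i A"
  unfolding util_def by (metis add.commute finite_subset sum.subset_diff)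

lemma util_le_card: "(\<forall>j\<in>S. v i j \<le> a) \<Longrightarrow> util v i S \<le> card S * a"
  unfolding util_def using sum_bounded_above[of S "v i" a] by simp

lemma finite_allocs: "finite (allocs m k)"
proof -
  have "allocs m k \<subseteq> Pow {..<m}" unfolding allocs_def by auto
  thus ?thesis by (rule finite_subset) simp
qed

lemma empty_allocs: "{} \<in> allocs m k" unfolding allocs_def by simp

lemma allocs_finite: "y \<in> allocs m k \<Longrightarrow> finite y"
  unfolding allocs_def by (auto intro: finite_subset)

lemma Max_util_ge: "y \<in> allocs m k \<Longrightarrow> util v i y \<le> Max ((\<lambda>y. util v i y) ` allocs m k)"
  by (rule Max_ge) (auto simp: finite_allocs)

lemma Max_util_in: "\<exists>S\<in>allocs m k. util v i S = Max ((\<lambda>y. util v i y) ` allocs m k)"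
proof -
  have "Max ((\<lambda>y. util v i y) ` allocs m k) \<in> (\<lambda>y. util v i y) ` allocs m k"
    using Max_in[OF finite_imageI[OF finite_allocs]] empty_allocs by blast
  thus ?thesis by auto
qed

lemma weier:
  fixes s :: "nat \<Rightarrow> real"
  shows "finite F \<Longrightarrow> (\<forall>j\<in>F. 0 \<le> s j \<and> s j \<le> 1) \<Longrightarrow> 1 - sum s F \<le> (\<Prod>j\<in>F. 1 - s j)"
proof (induction F rule: finite_induct)
  case empty
  then show ?case by simp
next
  case (insert a F)
  have h1: "1 - sum s F \<le> (\<Prod>j\<in>F. 1 - s j)" using insert by simp
  have h2: "0 \<le> 1 - s a" "0 \<le> s a" using insert by auto
  have h3: "0 \<le> sum s F" using insert by (simp add: sum_nonneg)
  have "1 - sum s (insert a F) = 1 - s a - sum s F" using insert by simp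
  also have "\<dots> \<le> (1 - s a) * (1 - sum s F)" using h2 h3 by (simp add: algebra_simps)
  also have "\<dots> \<le> (1 - s a) * (\<Prod>j\<in>F. 1 - s j)" by (rule mult_left_mono[OF h1 h2(1)])
  also have "\<dots> = (\<Prod>j\<in>insert a F. 1 - s j)" using insert by simp
  finally show ?case .
qed

lemma key:
  fixes U W A :: "nat \<Rightarrow> real"
  assumes i: "i < n" and U: "\<forall>j<n. 0 < U j" and W: "\<forall>j<n. 0 \<le> W j"
    and A: "\<forall>j<n. j \<noteq> i \<longrightarrow> 0 \<le> A j \<and> A j \<le> U j \<and> U j - A j \<le> W j"
    and P: "(\<Prod>j<n. W j) \<le> (\<Prod>j<n. U j)"
  shows "W i * (1 - (\<Sum>j\<in>{..<n}-{i}. A j / U j)) \<le> U i"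
proof -
  define N where "N = {..<n} - {i}"
  have fN: "finite N" unfolding N_def by simp
  have PU: "0 < (\<Prod>j\<in>N. U j)" using U unfolding N_def by (intro prod_pos) auto
  have eW: "(\<Prod>j<n. W j) = W i * (\<Prod>j\<in>N. W j)" unfolding N_def using i
    by (simp add: prod.remove)
  have eU: "(\<Prod>j<n. U j) = U i * (\<Prod>j\<in>N. U j)" unfolding N_def using i
    by (simp add: prod.remove)
  have m1: "(\<Prod>j\<in>N. U j - A j) \<le> (\<Prod>j\<in>N. W j)"
    using A unfolding N_def by (intro prod_mono) auto
  have e2: "(\<Prod>j\<in>N. U j - A j) = (\<Prod>j\<in>N. U j) * (\<Prod>j\<in>N. 1 - A j / U j)"
  proof -
    have "(\<Prod>j\<in>N. U j - A j) = (\<Prod>j\<in>N. U j * (1 - A j / U j))"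
      using U unfolding N_def by (intro prod.cong) (auto simp: field_simps)
    thus ?thesis by (simp add: prod.distrib)
  qed
  have wk: "1 - (\<Sum>j\<in>N. A j / U j) \<le> (\<Prod>j\<in>N. 1 - A j / U j)"
    using A U fN unfolding N_def by (intro weier) (auto simp: field_simps)
  have Wi: "0 \<le> W i" using W i by simp
  have "W i * (\<Prod>j\<in>N. U j) * (1 - (\<Sum>j\<in>N. A j / U j)) \<le> W i * (\<Prod>j\<in>N. U j) * (\<Prod>j\<in>N. 1 - A j / U j)"
    using wk Wi PU by (intro mult_left_mono) auto
  also have "\<dots> = W i * (\<Prod>j\<in>N. U j - A j)" using e2 by simp
  also have "\<dots> \<le> W i * (\<Prod>j\<in>N. W j)" using m1 Wi by (rule mult_left_mono)
  also have "\<dots> \<le> U i * (\<Prod>j\<in>N. U j)" using P eW eU by simp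
  finally have "(W i * (1 - (\<Sum>j\<in>N. A j / U j))) * (\<Prod>j\<in>N. U j) \<le> U i * (\<Prod>j\<in>N. U j)"
    by (simp add: algebra_simps)
  with PU have "W i * (1 - (\<Sum>j\<in>N. A j / U j)) \<le> U i" by simp
  thus ?thesis unfolding N_def .
qed

lemma avg_min:
  fixes f :: "nat \<Rightarrow> real"
  assumes "\<forall>a\<in>X. 0 \<le> f a" "finite X" "r \<le> card X"
  shows "\<exists>E\<subseteq>X. card E = r \<and> real (card X) * sum f E \<le> real r * sum f X"
  using assms
proof (induction "card X - r" arbitrary: X)
  case 0
  then have "card X = r" by simp
  then show ?case by (intro exI[of _ X]) auto
next
  case (Suc d)
  show ?case
  proof (cases "r = 0")
    case True
    then show ?thesis by (intro exI[of _ "{}"]) auto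
  next
    case False
    have cX: "card X > r" using Suc by simp
    then have ne: "X \<noteq> {}" by auto
    obtain z where z: "z \<in> X" "\<forall>a\<in>X. f a \<le> f z"
      using Max_in[of "f ` X"] Max_ge[of "f ` X"] Suc.prems ne
      by (metis (no_types, lifting) finite_imageI image_iff image_is_empty)
    define X' where "X' = X - {z}"
    have cX': "card X' = card X - 1" unfolding X'_def using z Suc.prems by simp
    have "d = card X' - r" using Suc.hyps cX' by simp
    moreover have "\<forall>a\<in>X'. 0 \<le> f a" "finite X'" "r \<le> card X'"
      using Suc.prems cX cX' unfolding X'_def by auto
    ultimately obtain E where E: "E \<subseteq> X'" "card E = r" "real (card X') * sum f E \<le> real r * sum f X'"
      using Suc.hyps by blast
    have sX: "sum f X = sum f X' + f z" unfolding X'_def using z Suc.prems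
      by (simp add: sum.remove)
    have bnd: "sum f X \<le> real (card X) * f z"
      using sum_bounded_above[of X f "f z"] z by simp
    define c where "c = real (card X)"
    have c1: "c - 1 > 0" unfolding c_def using cX False by linarith
    have cX'r: "real (card X') = c - 1" unfolding c_def using cX' cX by (simp add: of_nat_diff)
    have r0: "0 \<le> real r" by simp
    have "(c - 1) * (c * sum f E) = c * ((c - 1) * sum f E)" by (simp add: algebra_simps)
    also have "\<dots> \<le> c * (real r * sum f X')" using E(3) cX'r c1 by (intro mult_left_mono) auto
    also have "\<dots> = real r * (c * sum f X - c * f z)" using sX by (simp add: algebra_simps)
    also have "\<dots> \<le> real r * (c * sum f X - sum f X)" using bnd c_def r0 by (intro mult_left_mono) auto
    also have "\<dots> = (c - 1) * (real r * sum f X)" by (simp add: algebra_simps)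
    finally have "c * sum f E \<le> real r * sum f X" using c1 by simp
    then show ?thesis using E unfolding c_def X'_def by blast
  qed
qed

lemma avg_max:
  fixes f :: "nat \<Rightarrow> real"
  assumes "\<forall>a\<in>X. 0 \<le> f a" "finite X" "r \<le> card X"
  shows "\<exists>E\<subseteq>X. card E = r \<and> real (card X) * sum f E \<ge> real r * sum f X"
proof -
  obtain E0 where E0: "E0 \<subseteq> X" "card E0 = card X - r" "real (card X) * sum f E0 \<le> real (card X - r) * sum f X"
    using avg_min[OF assms(1,2), of "card X - r"] by auto
  define E where "E = X - E0"
  have "card E = r" unfolding E_def using E0 assms by (simp add: card_Diff_subset finite_subset)
  moreover have sE: "sum f E = sum f X - sum f E0" unfolding E_def using E0 assms
    by (simp add: sum_diff finite_subset)
  moreover have "real (card X - r) = real (card X) - real r" using assms by (simp add: of_nat_diff)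
  moreover have "real (card X) * sum f E = real (card X) * sum f X - real (card X) * sum f E0"
    unfolding sE by (simp add: right_diff_distrib)
  ultimately have "real (card X) * sum f E \<ge> real r * sum f X" using E0(3)
    by (simp add: algebra_simps)
  moreover have "E \<subseteq> X" unfolding E_def by auto
  ultimately show ?thesis using \<open>card E = r\<close> by blast
qed



definition Tw :: "nat \<Rightarrow> (nat \<Rightarrow> nat \<Rightarrow> nat) \<Rightarrow> nat set \<Rightarrow> nat \<Rightarrow> nat \<Rightarrow> real" where
  "Tw n v x i g = (\<Sum>j\<in>{..<n}-{i}. real (v j g) / real (util v j x))"

lemma Tw_nonneg: "0 \<le> Tw n v x i g"
  unfolding Tw_def by (intro sum_nonneg) auto

lemma Tw_sum: "finite E \<Longrightarrow> (\<Sum>j\<in>{..<n}-{i}. real (util v j E) / real (util v j x)) = (\<Sum>g\<in>E. Tw n v x i g)"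
  unfolding Tw_def util_def by (subst sum.swap) (simp add: sum_divide_distrib)

lemma prod_strict:
  fixes f g :: "nat \<Rightarrow> nat"
  assumes "finite A" "\<forall>a\<in>A. 0 < f a \<and> f a \<le> g a" "i0 \<in> A" "f i0 < g i0"
  shows "prod f A < prod g A"
proof -
  have P: "prod f (A - {i0}) \<le> prod g (A - {i0})" using assms by (intro prod_mono) auto
  have P0: "0 < prod f (A - {i0})" using assms by (intro prod_pos) auto
  have "prod f A = f i0 * prod f (A - {i0})" using assms by (simp add: prod.remove)
  also have "\<dots> < g i0 * prod f (A - {i0})" using P0 assms by simp
  also have "\<dots> \<le> g i0 * prod g (A - {i0})" using P by simp
  also have "\<dots> = prod g A" using assms by (simp add: prod.remove)
  finally show ?thesis .
qed

context
  fixes n m k :: nat and v :: "nat \<Rightarrow> nat \<Rightarrow> nat" and x :: "nat set"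
  assumes n_pos: "n \<ge> 1" and xA: "x \<in> allocs m k"
    and opt: "\<forall>y\<in>allocs m k. NW n v y \<le> NW n v x"
    and posu: "\<forall>j<n. util v j x > 0"
begin

lemma fx: "finite x" using allocs_finite xA .

lemma prod_le: "y \<in> allocs m k \<Longrightarrow> (\<Prod>j<n. real (util v j y)) \<le> (\<Prod>j<n. real (util v j x))"
  using opt n_pos unfolding NW_def by simp

lemma swap:
  assumes i: "i < n" and E: "E \<subseteq> x" and y: "(x - E) \<union> D \<in> allocs m k"
  shows "real (util v i ((x - E) \<union> D)) * (1 - (\<Sum>g\<in>E. Tw n v x i g)) \<le> real (util v i x)"
proof -
  have fy: "finite ((x - E) \<union> D)" using allocs_finite y .
  have fE: "finite E" using E fx by (rule finite_subset)
  have A: "\<forall>j<n. j \<noteq> i \<longrightarrow> 0 \<le> real (util v j E) \<and> real (util v j E) \<le> real (util v j x)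
     \<and> real (util v j x) - real (util v j E) \<le> real (util v j ((x - E) \<union> D))"
  proof (intro allI impI)
    fix j assume j: "j < n" "j \<noteq> i"
    have "util v j x = util v j (x - E) + util v j E" by (rule util_split[OF fx E])
    moreover have "util v j (x - E) \<le> util v j ((x - E) \<union> D)" by (rule util_mono[OF fy]) auto
    ultimately show "0 \<le> real (util v j E) \<and> real (util v j E) \<le> real (util v j x)
     \<and> real (util v j x) - real (util v j E) \<le> real (util v j ((x - E) \<union> D))" by simp
  qed
  have "real (util v i ((x - E) \<union> D)) * (1 - (\<Sum>j\<in>{..<n}-{i}. real (util v j E) / real (util v j x))) \<le> real (util v i x)"
    by (rule key[where U = "\<lambda>j. real (util v j x)" and W = "\<lambda>j. real (util v j ((x - E) \<union> D))"
        and A = "\<lambda>j. real (util v j E)", OF i _ _ A prod_le[OF y]]) (use posu in auto)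
  thus ?thesis using Tw_sum[OF fE, where n=n and i=i and v=v and x=x] by simp
qed

lemma Tw_total: "i < n \<Longrightarrow> (\<Sum>g\<in>x. Tw n v x i g) = real n - 1"
proof -
  assume i: "i < n"
  have "(\<Sum>g\<in>x. Tw n v x i g) = (\<Sum>j\<in>{..<n}-{i}. real (util v j x) / real (util v j x))"
    by (rule Tw_sum[OF fx, where n=n and i=i and v=v and x=x, symmetric])
  also have "\<dots> = (\<Sum>j\<in>{..<n}-{i}. 1)" using posu by (intro sum.cong) auto
  also have "\<dots> = real n - 1" using i n_pos by (simp add: of_nat_diff)
  finally show ?thesis .
qed

lemma Tw_sub: "i < n \<Longrightarrow> X \<subseteq> x \<Longrightarrow> (\<Sum>g\<in>X. Tw n v x i g) \<le> real n - 1"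
  using sum_mono2[OF fx, of X "Tw n v x i"] Tw_nonneg Tw_total by auto

lemma add_zero:
  assumes i: "i < n" and c: "card x < k" and g: "g < m" "g \<notin> x"
  shows "v i g = 0"
proof -
  have y: "(x - {}) \<union> {g} \<in> allocs m k" using xA c g fx unfolding allocs_def by auto
  have "real (util v i ((x - {}) \<union> {g})) * (1 - (\<Sum>g\<in>{}. Tw n v x i g)) \<le> real (util v i x)"
    by (rule swap[OF i _ y]) simp
  moreover have "util v i ((x - {}) \<union> {g}) = util v i x + v i g"
    using fx g unfolding util_def by simp
  ultimately show ?thesis by simp
qed

lemma all_le:
  assumes i: "i < n" and c: "card x < k" and S: "S \<subseteq> {..<m}"
  shows "util v i S \<le> util v i x"
proof -
  have fS: "finite S" using S by (rule finite_subset) simp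
  have "util v i S = util v i (S - S \<inter> x) + util v i (S \<inter> x)" by (rule util_split[OF fS]) auto
  moreover have "util v i (S - S \<inter> x) = 0" unfolding util_def
  proof (intro sum.neutral ballI)
    fix g assume "g \<in> S - S \<inter> x"
    then show "v i g = 0" using add_zero[OF i c, of g] S by auto
  qed
  moreover have "util v i (S \<inter> x) \<le> util v i x" by (rule util_mono[OF fx]) auto
  ultimately show ?thesis by simp
qed

lemma paretoA: "pareto_optimal n m k v x"
  unfolding pareto_optimal_def
proof
  assume "\<exists>y\<in>allocs m k. pareto_dominates n v y x"
  then obtain y i0 where y: "y \<in> allocs m k" "\<forall>i<n. util v i x \<le> util v i y" "i0 < n" "util v i0 x < util v i0 y"
    unfolding pareto_dominates_def by auto
  have "(\<Prod>j<n. util v j x) < (\<Prod>j<n. util v j y)"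
    by (rule prod_strict) (use y posu in auto)
  hence "(\<Prod>j<n. real (util v j x)) < (\<Prod>j<n. real (util v j y))"
    by (metis of_nat_less_iff of_nat_prod)
  with prod_le[OF y(1)] show False by simp
qed

lemma prop1A:
  assumes i: "i < n"
  shows "real (util v i x) \<ge> Prop_share n m k v i \<or>
     (\<exists>g\<in>x. \<exists>g'\<in>{..<m}. real (util v i ((x - {g}) \<union> {g'})) \<ge> Prop_share n m k v i)"
proof (rule ccontr)
  define P where "P = Prop_share n m k v i"
  assume "\<not> ?thesis"
  hence nP: "real (util v i x) < P" and nS: "\<forall>g\<in>x. \<forall>g'\<in>{..<m}. real (util v i ((x - {g}) \<union> {g'})) < P"
    unfolding P_def by (auto simp: not_le)
  obtain S where S: "S \<in> allocs m k" "util v i S = Max ((\<lambda>y. util v i y) ` allocs m k)"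
    using Max_util_in by blast
  have PS: "real n * P = real (util v i S)" unfolding P_def Prop_share_def S(2) using n_pos by simp
  have P0: "0 \<le> P" unfolding P_def Prop_share_def by simp
  have xm: "x \<subseteq> {..<m}" "card x \<le> k" using xA unfolding allocs_def by auto
  have Sm: "S \<subseteq> {..<m}" "card S \<le> k" using S unfolding allocs_def by auto
  have fS: "finite S" using Sm by (meson finite_lessThan finite_subset)
  have "real (util v i S) \<le> real (util v i x) + (real n - 1) * P"
  proof (cases "card x < k")
    case True
    have "util v i S \<le> util v i x" by (rule all_le[OF i True Sm(1)])
    moreover have "0 \<le> (real n - 1) * P" using n_pos P0 by simp
    ultimately show ?thesis by simp
  next
    case False
    hence cx: "card x = k" using xm by simp
    show ?thesis
    proof (cases "S \<subseteq> x")
      case True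
      have "util v i S \<le> util v i x" by (rule util_mono[OF fx True])
      moreover have "0 \<le> (real n - 1) * P" using n_pos P0 by simp
      ultimately show ?thesis by simp
    next
      case False
      define Out where "Out = {..<m} - x"
      have Out: "finite Out" "Out \<noteq> {}" using False Sm unfolding Out_def by auto
      define a where "a = Max (v i ` Out)"
      have "a \<in> v i ` Out" unfolding a_def using Out by (intro Max_in) auto
      then obtain g0 where g0: "g0 \<in> Out" "v i g0 = a" by auto
      have ale: "\<forall>g'\<in>Out. v i g' \<le> a" unfolding a_def using Out by auto
      define X where "X = x - S"
      define D where "D = S - x"
      have fX: "finite X" unfolding X_def using fx by simp
      have each: "real a - real (v i g) \<le> Tw n v x i g * P" if g: "g \<in> X" for g
      proof -
        have gx: "g \<in> x" using g unfolding X_def by simp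
        have g0m: "g0 < m" "g0 \<notin> x" using g0 unfolding Out_def by auto
        have y: "(x - {g}) \<union> {g0} \<in> allocs m k"
        proof -
          have "card ((x - {g}) \<union> {g0}) \<le> card (x - {g}) + card {g0}" by (rule card_Un_le)
          also have "\<dots> = k" proof -
            have "x \<noteq> {}" using gx by auto
            hence "0 < k" using cx fx card_gt_0_iff[of x] by simp
            thus ?thesis using cx gx fx by simp
          qed
          finally show ?thesis using xm g0m unfolding allocs_def by auto
        qed
        have sw: "real (util v i ((x - {g}) \<union> {g0})) * (1 - (\<Sum>g\<in>{g}. Tw n v x i g)) \<le> real (util v i x)"
          by (rule swap[OF i _ y]) (use gx in auto)
        have uy: "util v i ((x - {g}) \<union> {g0}) + v i g = util v i x + a"
        proof -
          have "util v i ((x - {g}) \<union> {g0}) = util v i (x - {g}) + util v i {g0}"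
            by (rule util_union) (use fx g0m in auto)
          moreover have "util v i x = util v i (x - {g}) + util v i {g}"
            by (rule util_split[OF fx]) (use gx in auto)
          ultimately show ?thesis using g0 unfolding util_def by simp
        qed
        have lt: "real (util v i ((x - {g}) \<union> {g0})) < P" using nS gx g0m by auto
        have T0: "0 \<le> Tw n v x i g" by (rule Tw_nonneg)
        have "real (util v i ((x - {g}) \<union> {g0})) - real (util v i ((x - {g}) \<union> {g0})) * Tw n v x i g \<le> real (util v i x)"
          using sw by (simp add: algebra_simps)
        moreover have "real (util v i ((x - {g}) \<union> {g0})) * Tw n v x i g \<le> P * Tw n v x i g"
          using lt T0 by (intro mult_right_mono) auto
        moreover have "real (util v i ((x - {g}) \<union> {g0})) + real (v i g) = real (util v i x) + real a"
          using uy by (metis of_nat_add)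
        ultimately show ?thesis by (simp add: algebra_simps)
      qed
      have "(\<Sum>g\<in>X. real a - real (v i g)) \<le> (\<Sum>g\<in>X. Tw n v x i g * P)"
        using each by (rule sum_mono)
      also have "\<dots> = (\<Sum>g\<in>X. Tw n v x i g) * P" by (simp add: sum_distrib_right)
      also have "\<dots> \<le> (real n - 1) * P"
        using Tw_sub[OF i, of X] P_def nP by (intro mult_right_mono) (auto simp: X_def)
      finally have sumX: "real (card X) * real a - real (util v i X) \<le> (real n - 1) * P"
        by (simp add: sum_subtractf util_def)
      have uS: "util v i S = util v i D + util v i (S \<inter> x)"
        unfolding D_def using util_split[OF fS, of "S \<inter> x" v i] by (simp add: Diff_Int)
      have ux: "util v i x = util v i X + util v i (x \<inter> S)"
        unfolding X_def using util_split[OF fx, of "x \<inter> S" v i] by (simp add: Diff_Int)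
      have "util v i D \<le> card D * a" by (rule util_le_card) (use ale Sm in \<open>auto simp: D_def Out_def\<close>)
      have cD: "card D \<le> card X"
      proof -
        have "card S = card D + card (S \<inter> x)" unfolding D_def using fS
          by (metis Diff_Diff_Int Diff_subset card_Diff_subset card_mono finite_Diff le_add_diff_inverse2 Int_commute inf.cobounded1 Diff_Int card_Diff_subset_Int Int_lower1)
        moreover have "card x = card X + card (x \<inter> S)" unfolding X_def using fx
          by (metis Diff_Diff_Int Diff_subset card_Diff_subset card_mono finite_Diff le_add_diff_inverse2 Int_commute inf.cobounded1 Diff_Int card_Diff_subset_Int Int_lower1)
        ultimately show ?thesis using Sm cx by (simp add: Int_commute)
      qed
      have "real (util v i D) \<le> real (card X) * real a"
        using \<open>util v i D \<le> card D * a\<close> cD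
        by (metis of_nat_le_iff of_nat_mult le_trans mult_le_mono1)
      then show ?thesis using uS ux sumX by (simp add: Int_commute)
    qed
  qed
  hence "real n * P \<le> real (util v i x) + (real n - 1) * P" using PS by simp
  hence "P \<le> real (util v i x)" by (simp add: algebra_simps)
  with nP show False by simp
qed

lemma rrsA:
  assumes i: "i < n"
  shows "real (Max ((\<lambda>y. util v i y) ` allocs m (k div n))) \<le> real n * real (util v i x)"
proof -
  define q where "q = k div n"
  obtain R where R: "R \<in> allocs m q" "util v i R = Max ((\<lambda>y. util v i y) ` allocs m q)"
    using Max_util_in by blast
  have xm: "x \<subseteq> {..<m}" "card x \<le> k" using xA unfolding allocs_def by auto
  have Rm: "R \<subseteq> {..<m}" "card R \<le> q" using R unfolding allocs_def by auto
  have fR: "finite R" using Rm by (meson finite_lessThan finite_subset)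
  have qn: "q * n \<le> k" unfolding q_def by (rule div_times_less_eq_dividend)
  have qk: "q \<le> k" using qn n_pos by (metis le_trans mult.right_neutral mult_le_mono2)
  have "util v i R \<le> n * util v i x"
  proof (cases "card x < k")
    case True
    have "util v i R \<le> util v i x" by (rule all_le[OF i True Rm(1)])
    also have "\<dots> \<le> n * util v i x" using n_pos by simp
    finally show ?thesis .
  next
    case False
    hence cx: "card x = k" using xm by simp
    define X where "X = x - R"
    define D where "D = R - x"
    define r where "r = card D"
    have fX: "finite X" unfolding X_def using fx by simp
    have cR: "card R = card D + card (R \<inter> x)" unfolding D_def using fR
      by (metis Diff_Diff_Int Diff_subset card_Diff_subset card_mono finite_Diff le_add_diff_inverse2 Int_commute inf.cobounded1 Diff_Int card_Diff_subset_Int Int_lower1)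
    have cX: "card x = card X + card (x \<inter> R)" unfolding X_def using fx
      by (metis Diff_Diff_Int Diff_subset card_Diff_subset card_mono finite_Diff le_add_diff_inverse2 Int_commute inf.cobounded1 Diff_Int card_Diff_subset_Int Int_lower1)
    have rX: "r \<le> card X" using cR cX Rm cx qk unfolding r_def by (simp add: Int_commute)
    have nr: "n * r \<le> card X"
    proof -
      have rq: "r \<le> q" using cR Rm unfolding r_def by simp
      have "(n - 1) * r \<le> (n - 1) * q" using rq by (rule mult_le_mono2)
      moreover have "n * r = (n - 1) * r + r" using n_pos by (simp add: algebra_simps)
      moreover have "q * n = (n - 1) * q + q" using n_pos by (simp add: algebra_simps)
      moreover have "card (x \<inter> R) = card (R \<inter> x)" by (simp add: Int_commute)
      ultimately show ?thesis using cR cX Rm cx qn rq unfolding r_def by linarith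
    qed
    obtain E where E: "E \<subseteq> X" "card E = r" "real (card X) * (\<Sum>g\<in>E. Tw n v x i g) \<le> real r * (\<Sum>g\<in>X. Tw n v x i g)"
      using avg_min[of X "Tw n v x i" r] Tw_nonneg fX rX by auto
    define T where "T = (\<Sum>g\<in>E. Tw n v x i g)"
    have TX: "(\<Sum>g\<in>X. Tw n v x i g) \<le> real n - 1" by (rule Tw_sub[OF i]) (auto simp: X_def)
    have Ex: "E \<subseteq> x" using E unfolding X_def by auto
    have fE: "finite E" using Ex fx by (rule finite_subset)
    have nT: "real n * T \<le> real n - 1"
    proof (cases "card X = 0")
      case True
      hence "E = {}" using E fX by (metis card_0_eq finite_subset subset_empty)
      thus ?thesis unfolding T_def using n_pos by simp
    next
      case False
      have c0: "0 < real (card X)" using False by simp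
      have "real (card X) * (real n * T) = real n * (real (card X) * T)" by (simp add: algebra_simps)
      also have "\<dots> \<le> real n * (real r * (real n - 1))"
      proof -
        have "real r * (\<Sum>g\<in>X. Tw n v x i g) \<le> real r * (real n - 1)"
          using TX by (intro mult_left_mono) auto
        hence "real (card X) * T \<le> real r * (real n - 1)" using E(3) unfolding T_def by linarith
        thus ?thesis by (intro mult_left_mono) auto
      qed
      also have "\<dots> = real (n * r) * (real n - 1)" by simp
      also have "\<dots> \<le> real (card X) * (real n - 1)"
      proof (rule mult_right_mono)
        show "real (n * r) \<le> real (card X)" using nr by (simp only: of_nat_le_iff)
      qed (use n_pos in auto)
      finally show ?thesis using c0 by simp
    qed
    have y: "(x - E) \<union> D \<in> allocs m k"
    proof -
      have "card ((x - E) \<union> D) \<le> card (x - E) + card D" by (rule card_Un_le)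
      also have "\<dots> = k" using cx Ex fE E(2) r_def card_Diff_subset[OF fE Ex] card_mono[OF fx Ex] by simp
      finally show ?thesis using xm Rm unfolding allocs_def D_def by auto
    qed
    have sw: "real (util v i ((x - E) \<union> D)) * (1 - T) \<le> real (util v i x)"
      unfolding T_def by (rule swap[OF i Ex y])
    have uy: "util v i ((x - E) \<union> D) = util v i (x - E) + util v i D"
      by (rule util_union) (use fx fR in \<open>auto simp: D_def\<close>)
    have u1: "util v i (x \<inter> R) \<le> util v i (x - E)"
      by (rule util_mono) (use fx E in \<open>auto simp: X_def\<close>)
    have uR: "util v i R = util v i D + util v i (R \<inter> x)"
      unfolding D_def using util_split[OF fR, of "R \<inter> x" v i] by (simp add: Diff_Int)
    have Ry: "real (util v i R) \<le> real (util v i ((x - E) \<union> D))"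
      using uy u1 uR by (simp add: Int_commute)
    have T1: "0 \<le> 1 - T" using nT n_pos
      by (smt (verit, ccfv_SIG) mult_le_cancel_left1 of_nat_0_less_iff of_nat_1 of_nat_le_iff)
    have "real (util v i R) \<le> real (util v i R) * (real n * (1 - T))"
    proof -
      have "1 \<le> real n * (1 - T)" using nT by (simp add: algebra_simps)
      thus ?thesis by (simp add: mult_le_cancel_left1)
    qed
    also have "\<dots> = real n * (real (util v i R) * (1 - T))" by (simp add: algebra_simps)
    also have "\<dots> \<le> real n * (real (util v i ((x - E) \<union> D)) * (1 - T))"
      using Ry T1 by (intro mult_left_mono mult_right_mono) auto
    also have "\<dots> \<le> real n * real (util v i x)" using sw by (intro mult_left_mono) auto
    finally have "real (util v i R) \<le> real n * real (util v i x)" .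
    thus ?thesis by (metis of_nat_le_iff of_nat_mult)
  qed
  thus ?thesis using R unfolding q_def by (metis of_nat_le_iff of_nat_mult)
qed

end



lemma allocs0: "allocs m 0 = {{}}"
proof -
  have "y = {}" if "y \<subseteq> {..<m}" "card y = 0" for y :: "nat set"
    using that finite_subset[OF that(1)] by simp
  thus ?thesis unfolding allocs_def by auto
qed

lemma Max0: "Max ((\<lambda>y. util v i y) ` allocs m 0) = 0"
  unfolding allocs0 util_def by simp

lemma prop_bound:
  assumes n: "n \<ge> 1" "n \<le> k"
  shows "real (Max ((\<lambda>y. util v i y) ` allocs m k)) \<le> (2 * real n - 1) * real (Max ((\<lambda>y. util v i y) ` allocs m (k div n)))"
proof -
  define q where "q = k div n"
  define M where "M = Max ((\<lambda>y. util v i y) ` allocs m q)"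
  have "n div n \<le> k div n" by (rule div_le_mono) (use n in simp)
  hence q1: "q \<ge> 1" unfolding q_def using n by simp
  have kq: "k \<le> (2 * n - 1) * q"
  proof -
    have "k = q * n + k mod n" unfolding q_def by simp
    moreover have "k mod n \<le> n - 1" proof -
      have "k mod n < n" using n by simp
      thus ?thesis by simp
    qed
    moreover have "n - 1 \<le> (n - 1) * q" using q1 by simp
    moreover have "(2 * n - 1) * q = q * n + (n - 1) * q" using n by (simp add: algebra_simps diff_mult_distrib)
    ultimately show ?thesis by linarith
  qed
  obtain S where S: "S \<in> allocs m k" "util v i S = Max ((\<lambda>y. util v i y) ` allocs m k)"
    using Max_util_in by blast
  have Sm: "S \<subseteq> {..<m}" "card S \<le> k" using S unfolding allocs_def by auto
  have fS: "finite S" using Sm by (meson finite_lessThan finite_subset)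
  have M0: "0 \<le> real M" by simp
  have "real (util v i S) \<le> (2 * real n - 1) * real M"
  proof (cases "card S \<le> q")
    case True
    hence "S \<in> allocs m q" using Sm unfolding allocs_def by auto
    hence "util v i S \<le> M" unfolding M_def by (rule Max_util_ge)
    moreover have "1 \<le> 2 * real n - 1" using n by simp
    moreover have "1 * real M \<le> (2 * real n - 1) * real M"
      using \<open>1 \<le> 2 * real n - 1\<close> M0 by (rule mult_right_mono)
    ultimately show ?thesis by simp
  next
    case False
    obtain E where E: "E \<subseteq> S" "card E = q" "real (card S) * (\<Sum>g\<in>E. real (v i g)) \<ge> real q * (\<Sum>g\<in>S. real (v i g))"
      using avg_max[of S "\<lambda>g. real (v i g)" q] fS False by auto
    have "E \<in> allocs m q" using E Sm unfolding allocs_def by auto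
    hence EM: "util v i E \<le> M" unfolding M_def by (rule Max_util_ge)
    have "real q * real (util v i S) \<le> real (card S) * real (util v i E)"
      using E(3) unfolding util_def by simp
    also have "\<dots> \<le> real k * real M" using Sm EM by (intro mult_mono) auto
    also have "\<dots> \<le> real ((2 * n - 1) * q) * real M"
    proof (rule mult_right_mono)
      show "real k \<le> real ((2 * n - 1) * q)" using kq by (simp only: of_nat_le_iff)
    qed (rule M0)
    also have "\<dots> = real q * ((2 * real n - 1) * real M)" using n by (simp add: of_nat_diff)
    finally show ?thesis using q1 by simp
  qed
  thus ?thesis using S unfolding M_def q_def by simp
qed

lemma prop1_triv:
  assumes n: "n \<ge> 1" "k \<le> n" and xe: "k = 0 \<or> x \<noteq> {}" and i: "\<exists>j<m. v i j > 0" and fx: "finite x"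
  shows "real (util v i x) \<ge> Prop_share n m k v i \<or>
     (\<exists>g\<in>x. \<exists>g'\<in>{..<m}. real (util v i ((x - {g}) \<union> {g'})) \<ge> Prop_share n m k v i)"
proof (cases "k = 0")
  case True
  then show ?thesis unfolding Prop_share_def using Max0 by simp
next
  case False
  then obtain g where g: "g \<in> x" using xe by auto
  have m0: "{..<m} \<noteq> {}" using i by auto
  have "Max (v i ` {..<m}) \<in> v i ` {..<m}" using m0 by (intro Max_in) auto
  then obtain h where h: "h < m" "v i h = Max (v i ` {..<m})" by auto
  have hle: "\<forall>j<m. v i j \<le> v i h" using h by auto
  obtain S where S: "S \<in> allocs m k" "util v i S = Max ((\<lambda>y. util v i y) ` allocs m k)"
    using Max_util_in by blast
  have Sm: "S \<subseteq> {..<m}" "card S \<le> k" using S unfolding allocs_def by auto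
  have "util v i S \<le> card S * v i h" by (rule util_le_card) (use hle Sm in auto)
  also have "\<dots> \<le> n * v i h" using Sm n by (intro mult_le_mono1) auto
  finally have "real (util v i S) \<le> real n * real (v i h)" by (metis of_nat_le_iff of_nat_mult)
  hence P: "Prop_share n m k v i \<le> real (v i h)" unfolding Prop_share_def S(2)[symmetric]
    using n by (simp add: field_simps)
  have "v i h \<le> util v i ((x - {g}) \<union> {h})"
  proof -
    have "util v i {h} \<le> util v i ((x - {g}) \<union> {h})"
      by (rule util_mono) (use fx in \<open>auto\<close>)
    thus ?thesis unfolding util_def by simp
  qed
  hence "Prop_share n m k v i \<le> real (util v i ((x - {g}) \<union> {h}))" using P by linarith
  thus ?thesis using g h by blast
qed



theorem theorem5:
  fixes n m k :: nat and v :: "nat \<Rightarrow> nat \<Rightarrow> nat" and x :: "nat set"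
  assumes n_pos: "n \<ge> 1"
    and k_le: "k \<le> m"
    and nonzero: "\<forall>i<n. \<exists>j<m. v i j > 0"
    and mnw: "MNW n m k v x"
  shows "pareto_optimal n m k v x \<and> Prop1 n m k v x
         \<and> alpha_RRS (1 / real n) n m k v x
         \<and> (k \<ge> n \<longrightarrow> alpha_Prop (1 / (2 * real n - 1)) n m k v x)"
proof -
  have n0: "0 < n" using n_pos by simp
  have xA: "x \<in> allocs m k" using mnw unfolding MNW_def by simp
  have fx: "finite x" using allocs_finite[OF xA] .
  obtain c where c: "\<forall>i. i < n \<longrightarrow> c i < m \<and> 0 < v i (c i)" using nonzero by metis
  have caseA_k: "\<exists>y\<in>allocs m k. NW n v y > 0" if nk: "n \<le> k"
  proof -
    define y where "y = c ` {..<n}"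
    have fy: "finite y" unfolding y_def by simp
    have "card y \<le> n" unfolding y_def using card_image_le[of "{..<n}" c] by simp
    hence yA: "y \<in> allocs m k" using c nk unfolding allocs_def y_def by auto
    have "\<forall>i<n. 0 < util v i y"
    proof (intro allI impI)
      fix i assume i: "i < n"
      have "util v i {c i} \<le> util v i y" by (rule util_mono[OF fy]) (use i in \<open>auto simp: y_def\<close>)
      thus "0 < util v i y" using c i unfolding util_def by auto
    qed
    hence "0 < (\<Prod>i<n. real (util v i y))" by (intro prod_pos) auto
    hence "NW n v y > 0" unfolding NW_def using n0 by simp
    thus ?thesis using yA by blast
  qed
  show ?thesis
  proof (cases "\<exists>y\<in>allocs m k. NW n v y > 0")
    case True
    have opt: "\<forall>y\<in>allocs m k. NW n v y \<le> NW n v x" using mnw True unfolding MNW_def by simp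
    have NWx: "0 < NW n v x" using True opt by fastforce
    have posu: "\<forall>j<n. util v j x > 0"
    proof (intro allI impI, rule ccontr)
      fix j assume j: "j < n" "\<not> 0 < util v j x"
      have pz: "(\<Prod>i<n. real (util v i x)) = 0" using j by (intro prod_zero) auto
      have "NW n v x = 0" unfolding NW_def pz by simp
      with NWx show False by simp
    qed
    have P1: "pareto_optimal n m k v x" by (rule paretoA[OF n_pos xA opt posu])
    have P2: "Prop1 n m k v x" unfolding Prop1_def using prop1A[OF n_pos xA opt posu] by blast
    have rr: "real (Max ((\<lambda>y. util v i y) ` allocs m (k div n))) \<le> real n * real (util v i x)" if "i < n" for i
      by (rule rrsA[OF n_pos xA opt posu that])
    have P3: "alpha_RRS (1 / real n) n m k v x" unfolding alpha_RRS_def RRS_def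
    proof (intro allI impI)
      fix i assume i: "i < n"
      show "1 / real n * real (Max ((\<lambda>y. util v i y) ` allocs m (k div n))) \<le> real (util v i x)"
        using rr[OF i] n0 by (simp add: field_simps)
    qed
    have P4: "alpha_Prop (1 / (2 * real n - 1)) n m k v x" if nk: "n \<le> k"
      unfolding alpha_Prop_def Prop_share_def
    proof (intro allI impI)
      fix i assume i: "i < n"
      define Mk where "Mk = real (Max ((\<lambda>y. util v i y) ` allocs m k))"
      define Mq where "Mq = real (Max ((\<lambda>y. util v i y) ` allocs m (k div n)))"
      have b1: "Mk \<le> (2 * real n - 1) * Mq" unfolding Mk_def Mq_def by (rule prop_bound[OF n_pos nk])
      have b2: "Mq \<le> real n * real (util v i x)" unfolding Mq_def by (rule rr[OF i])
      have pos: "0 < 2 * real n - 1" using n_pos by simp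
      have "Mk \<le> (2 * real n - 1) * (real n * real (util v i x))"
        using b1 b2 pos by (meson mult_left_mono less_imp_le order_trans)
      thus "1 / (2 * real n - 1) * (1 / real n * Mk) \<le> real (util v i x)"
        using pos n0 by (simp add: field_simps)
    qed
    show ?thesis using P1 P2 P3 P4 by blast
  next
    case False
    have kn: "k < n" using False caseA_k by force
    have B: "\<forall>y\<in>allocs m k. card (pos_agents n v y) \<le> card (pos_agents n v x) \<and>
              (card (pos_agents n v y) = card (pos_agents n v x) \<longrightarrow>
                 (\<Prod>i\<in>pos_agents n v y. util v i y) \<le> (\<Prod>i\<in>pos_agents n v x. util v i x))"
      using mnw False unfolding MNW_def by simp
    have fpos: "finite (pos_agents n v y)" for y unfolding pos_agents_def by simp
    have xe: "k = 0 \<or> x \<noteq> {}"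
    proof (rule ccontr)
      assume "\<not> (k = 0 \<or> x \<noteq> {})"
      hence k1: "k \<ge> 1" and xe: "x = {}" by auto
      have c0: "c 0 < m" "0 < v 0 (c 0)" using c n0 by auto
      have "{c 0} \<in> allocs m k" using c0 k1 unfolding allocs_def by auto
      hence "card (pos_agents n v {c 0}) \<le> card (pos_agents n v x)" using B by blast
      moreover have "pos_agents n v x = {}" unfolding pos_agents_def xe util_def by simp
      moreover have "0 \<in> pos_agents n v {c 0}" unfolding pos_agents_def util_def using c0 n0 by simp
      ultimately show False using fpos[of "{c 0}"] card_gt_0_iff[of "pos_agents n v {c 0}"] by auto
    qed
    have P1: "pareto_optimal n m k v x"
      unfolding pareto_optimal_def
    proof
      assume "\<exists>y\<in>allocs m k. pareto_dominates n v y x"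
      then obtain y i0 where y: "y \<in> allocs m k" "\<forall>i<n. util v i x \<le> util v i y" "i0 < n" "util v i0 x < util v i0 y"
        unfolding pareto_dominates_def by auto
      have sub: "pos_agents n v x \<subseteq> pos_agents n v y" using y unfolding pos_agents_def by fastforce
      have "card (pos_agents n v y) \<le> card (pos_agents n v x)" using B y by blast
      hence eq: "pos_agents n v x = pos_agents n v y" using sub fpos by (metis card_seteq)
      hence le: "(\<Prod>i\<in>pos_agents n v x. util v i y) \<le> (\<Prod>i\<in>pos_agents n v x. util v i x)" using B y by auto
      have "i0 \<in> pos_agents n v x" using eq y unfolding pos_agents_def by auto
      hence "(\<Prod>i\<in>pos_agents n v x. util v i x) < (\<Prod>i\<in>pos_agents n v x. util v i y)"
        by (intro prod_strict) (use y fpos in \<open>auto simp: pos_agents_def\<close>)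
      with le show False by simp
    qed
    have P2: "Prop1 n m k v x" unfolding Prop1_def
      using prop1_triv[OF n_pos _ xe _ fx] kn nonzero by auto
    have kd: "k div n = 0" using kn by simp
    have P3: "alpha_RRS (1 / real n) n m k v x" unfolding alpha_RRS_def RRS_def kd Max0 by simp
    show ?thesis using P1 P2 P3 kn by simp
  qed
qed

end
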